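(* If an additive integrator map $\psi$ is $N$-affine equivariant, then the partitioned integrator map defined by $\phi(f)=\psi(f^{[1]},\ldots,f^{[N]})$ is P-affine equivariant.
   Context: All spaces are real Banach spaces; $\mathfrak X(Y)$ denotes smooth vector fields on $Y$. For fixed $N$, an additive integrator map $\psi$ is a collection of smooth maps $\psi_Y\colon\mathfrak X(Y)^N\to\mathfrak X(Y)$, one per Banach space $Y$. It is $N$-affine equivariant if for every affine map $A$ between Banach spaces, $f^{[\nu]}\sim_A g^{[\nu]}$ for all $\nu$ implies $\psi(f^{[1]},\ldots,f^{[N]})\sim_A\psi(g^{[1]},\ldots,g^{[N]})$, where $f\sim_\chi g$ means $\chi'(y)f(y)=g(\chi(y))$ for all $y$. A partitioned Banach space is $Y=Y^{[1]}\oplus\cdots\oplus Y^{[N]}$; for $f\in\mathfrak X(Y)$, $f^{[\nu]}$ denotes the vector field on $Y$ obtained by keeping only the $Y^{[\nu]}$-component of $f$, so $f=f^{[1]}+\cdots+f^{[N]}$ is uniquely determined by the partition. A partitioned integrator map is a collection of smooth maps $\phi\colon\mathfrak X(Y)\to\mathfrak X(Y)$, one for each partitioned Banach space. A map $A\colon Y\to U$ between partitioned spaces is P-affine if $A=\bigoplus_\nu A^{[\nu]}$ with each $A^{[\nu]}\colon Y^{[\nu]}\to U^{[\nu]}$ affine; a partitioned integrator map is P-affine equivariant if $f\sim_A g$ implies $\phi(f)\sim_A\phi(g)$ for all P-affine $A$. *)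

theory Defs
  imports "HOL-Analysis.Analysis"
begin

text \<open>A k-linear map is represented as a function on lists of vectors (only lists
of length k matter).  mnorm is its operator norm.\<close>

definition mnorm :: "nat \<Rightarrow> ('a::real_normed_vector list \<Rightarrow> 'b::real_normed_vector) \<Rightarrow> real" where
  "mnorm k M = Sup {norm (M vs) | vs. length vs = k \<and> (\<forall>v\<in>set vs. norm v \<le> 1)}"

definition bounded_multilinear :: "nat \<Rightarrow> ('a::real_normed_vector list \<Rightarrow> 'b::real_normed_vector) \<Rightarrow> bool" where
  "bounded_multilinear k M \<longleftrightarrow>
     (\<forall>i<k. \<forall>vs. length vs = k \<longrightarrow> linear (\<lambda>v. M (vs[i := v]))) \<and>
     bdd_above {norm (M vs) | vs. length vs = k \<and> (\<forall>v\<in>set vs. norm v \<le> 1)}"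

text \<open>D is a full tower of Frechet derivatives of f: D 0 y [] = f y, each D k y is a
bounded k-linear map, and y \<mapsto> D k y is Frechet differentiable (w.r.t. the operator norm)
with derivative D (k+1) y (first slot = direction of differentiation).\<close>

definition derivative_tower :: "('a::real_normed_vector \<Rightarrow> 'b::real_normed_vector) \<Rightarrow> (nat \<Rightarrow> 'a \<Rightarrow> 'a list \<Rightarrow> 'b) \<Rightarrow> bool" where
  "derivative_tower f D \<longleftrightarrow>
     (\<forall>y. D 0 y [] = f y) \<and>
     (\<forall>k y. bounded_multilinear k (D k y)) \<and>
     (\<forall>k y. ((\<lambda>h. mnorm k (\<lambda>vs. D k (y + h) vs - D k y vs - D (Suc k) y (h # vs)) / norm h)
               \<longlongrightarrow> 0) (at 0))"

definition smooth :: "('a::real_normed_vector \<Rightarrow> 'b::real_normed_vector) \<Rightarrow> bool" where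
  "smooth f \<longleftrightarrow> (\<exists>D. derivative_tower f D)"

definition affine_map :: "('a::real_normed_vector \<Rightarrow> 'b::real_normed_vector) \<Rightarrow> bool" where
  "affine_map A \<longleftrightarrow> (\<exists>L b. bounded_linear L \<and> (\<forall>x. A x = L x + b))"

definition related :: "('a::real_normed_vector \<Rightarrow> 'b::real_normed_vector) \<Rightarrow> ('a \<Rightarrow> 'a) \<Rightarrow> ('b \<Rightarrow> 'b) \<Rightarrow> bool" where
  "related C f g \<longleftrightarrow> (\<forall>y. frechet_derivative C (at y) (f y) = g (C y))"

text \<open>The component maps \<psi>_Y of an additive integrator map, on N-tuples (lists of length N)
of smooth vector fields.  N-affine equivariance between the components on two spaces.\<close>

definition affine_equivariant_pair ::
  "nat \<Rightarrow> (('a::real_normed_vector \<Rightarrow> 'a) list \<Rightarrow> ('a \<Rightarrow> 'a)) \<Rightarrow> (('b::real_normed_vector \<Rightarrow> 'b) list \<Rightarrow> ('b \<Rightarrow> 'b)) \<Rightarrow> bool" where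
  "affine_equivariant_pair N \<psi>1 \<psi>2 \<longleftrightarrow>
     (\<forall>A fs gs. affine_map A \<and> length fs = N \<and> length gs = N \<and>
        (\<forall>f\<in>set fs. smooth f) \<and> (\<forall>g\<in>set gs. smooth g) \<and>
        (\<forall>i<N. related A (fs ! i) (gs ! i))
        \<longrightarrow> related A (\<psi>1 fs) (\<psi>2 gs))"

definition maps_fields :: "nat \<Rightarrow> (('a::real_normed_vector \<Rightarrow> 'a) list \<Rightarrow> ('a \<Rightarrow> 'a)) \<Rightarrow> bool" where
  "maps_fields N \<psi> \<longleftrightarrow> (\<forall>fs. length fs = N \<and> (\<forall>f\<in>set fs. smooth f) \<longrightarrow> smooth (\<psi> fs))"

text \<open>A partition Y = Y[0] + ... + Y[N-1] (indices shifted to 0..N-1) is given by the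
bounded linear projections p \<nu> onto the summands: complementary idempotents summing to id.
The summand Y[\<nu>] is range (p \<nu>).\<close>

definition partition :: "nat \<Rightarrow> (nat \<Rightarrow> 'a::real_normed_vector \<Rightarrow> 'a) \<Rightarrow> bool" where
  "partition N p \<longleftrightarrow>
     (\<forall>\<nu><N. bounded_linear (p \<nu>)) \<and>
     (\<forall>\<nu><N. \<forall>\<mu><N. \<forall>y. p \<nu> (p \<mu> y) = (if \<nu> = \<mu> then p \<nu> y else 0)) \<and>
     (\<forall>y. (\<Sum>\<nu><N. p \<nu> y) = y)"

definition component :: "(nat \<Rightarrow> 'a \<Rightarrow> 'a) \<Rightarrow> nat \<Rightarrow> ('a \<Rightarrow> 'a) \<Rightarrow> ('a \<Rightarrow> 'a)" where
  "component p \<nu> f = (\<lambda>y. p \<nu> (f y))"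

text \<open>A = \<oplus> A[\<nu>] with A[\<nu>] : Y[\<nu>] \<rightarrow> U[\<nu>] affine (an affine map on the closed subspace
Y[\<nu>] is the restriction of an affine map on Y, e.g. its composition with p \<nu>).\<close>
definition P_affine :: "nat \<Rightarrow> (nat \<Rightarrow> 'a::real_normed_vector \<Rightarrow> 'a) \<Rightarrow> (nat \<Rightarrow> 'b::real_normed_vector \<Rightarrow> 'b) \<Rightarrow> ('a \<Rightarrow> 'b) \<Rightarrow> bool" where
  "P_affine N p q A \<longleftrightarrow>
     (\<exists>Ac. (\<forall>\<nu><N. affine_map (Ac \<nu>) \<and> Ac \<nu> ` range (p \<nu>) \<subseteq> range (q \<nu>)) \<and>
           (\<forall>y. A y = (\<Sum>\<nu><N. Ac \<nu> (p \<nu> y))))"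

definition induced_partitioned :: "nat \<Rightarrow> (nat \<Rightarrow> 'a \<Rightarrow> 'a) \<Rightarrow> (('a \<Rightarrow> 'a) list \<Rightarrow> ('a \<Rightarrow> 'a)) \<Rightarrow> ('a \<Rightarrow> 'a) \<Rightarrow> ('a \<Rightarrow> 'a)" where
  "induced_partitioned N p \<psi> f = \<psi> (map (\<lambda>\<nu>. component p \<nu> f) [0..<N])"

end

theory Submission
  imports Defs
begin

lemma bdd_norm_iff:
  "bdd_above {norm (M vs) | vs. Q vs} \<longleftrightarrow> (\<exists>B. \<forall>vs. Q vs \<longrightarrow> norm (M vs) \<le> B)"
  unfolding bdd_above_def by blast

lemma mnorm_nonneg:
  assumes "bdd_above {norm (M vs) | vs. length vs = k \<and> (\<forall>v\<in>set vs. norm v \<le> 1)}"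
  shows "0 \<le> mnorm k M"
proof -
  have "norm (M (replicate k 0)) \<in> {norm (M vs) | vs. length vs = k \<and> (\<forall>v\<in>set vs. norm v \<le> 1)}"
    by auto
  from cSup_upper2[OF this _ assms] show ?thesis unfolding mnorm_def by simp
qed

lemma mnorm_comp_le:
  fixes M :: "'a::real_normed_vector list \<Rightarrow> 'b::real_normed_vector"
  assumes bdd: "bdd_above {norm (M vs) | vs. length vs = k \<and> (\<forall>v\<in>set vs. norm v \<le> 1)}"
    and K: "K > 0" "\<And>x. norm (P x) \<le> norm x * K"
  shows "mnorm k (\<lambda>vs. P (M vs)) \<le> K * mnorm k M"
  unfolding mnorm_def
proof (rule cSup_least)
  show "{norm (P (M vs)) |vs. length vs = k \<and> (\<forall>v\<in>set vs. norm v \<le> 1)} \<noteq> {}"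
    by (rule_tac ex_in_conv[THEN iffD1], auto intro!: exI[of _ "replicate k 0"])
  fix x assume "x \<in> {norm (P (M vs)) |vs. length vs = k \<and> (\<forall>v\<in>set vs. norm v \<le> 1)}"
  then obtain vs where vs: "length vs = k" "\<forall>v\<in>set vs. norm v \<le> 1" and x: "x = norm (P (M vs))" by blast
  have "norm (M vs) \<le> Sup {norm (M vs) | vs. length vs = k \<and> (\<forall>v\<in>set vs. norm v \<le> 1)}"
    by (rule cSup_upper[OF _ bdd]) (use vs in blast)
  then have "norm (M vs) * K \<le> K * Sup {norm (M vs) | vs. length vs = k \<and> (\<forall>v\<in>set vs. norm v \<le> 1)}"
    using K(1) by (simp add: mult.commute)
  then show "x \<le> K * Sup {norm (M vs) | vs. length vs = k \<and> (\<forall>v\<in>set vs. norm v \<le> 1)}"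
    using K(2)[of "M vs"] x by linarith
qed

lemma bdd_first_slot:
  fixes M :: "'a::real_normed_vector list \<Rightarrow> 'b::real_normed_vector"
  assumes "bounded_multilinear (Suc k) M"
  shows "\<exists>B. \<forall>vs. length vs = k \<and> (\<forall>v\<in>set vs. norm v \<le> 1) \<longrightarrow> norm (M (h # vs)) \<le> B"
proof -
  from assms obtain B where B: "\<forall>vs. length vs = Suc k \<and> (\<forall>v\<in>set vs. norm v \<le> 1) \<longrightarrow> norm (M vs) \<le> B"
    unfolding bounded_multilinear_def bdd_norm_iff by blast
  have lin: "\<And>vs. length vs = k \<Longrightarrow> linear (\<lambda>v. M (v # vs))"
  proof -
    fix vs :: "'a list" assume "length vs = k"
    with assms have "linear (\<lambda>v. M ((h # vs)[0 := v]))"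
      unfolding bounded_multilinear_def by (metis length_Cons zero_less_Suc)
    then show "linear (\<lambda>v. M (v # vs))" by simp
  qed
  show ?thesis
  proof (rule exI[of _ "norm h * B"], intro allI impI)
    fix vs :: "'a list" assume vs: "length vs = k \<and> (\<forall>v\<in>set vs. norm v \<le> 1)"
    have "M (h # vs) = M ((norm h *\<^sub>R sgn h) # vs)" by (cases "h = 0") (simp_all add: sgn_div_norm)
    also have "\<dots> = norm h *\<^sub>R M (sgn h # vs)"
      using linear_scale[OF lin[of vs]] vs by simp
    finally have eq: "norm (M (h # vs)) = norm h * norm (M (sgn h # vs))" by simp
    have "norm (M (sgn h # vs)) \<le> B" using B vs by (auto simp: norm_sgn)
    then show "norm (M (h # vs)) \<le> norm h * B" unfolding eq
      by (simp add: mult_left_mono)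
  qed
qed

lemma smooth_comp:
  fixes f :: "'a::real_normed_vector \<Rightarrow> 'b::real_normed_vector" and P :: "'b \<Rightarrow> 'b"
  assumes bl: "bounded_linear P" and sm: "smooth f"
  shows "smooth (\<lambda>y. P (f y))"
proof -
  obtain D where D: "derivative_tower f D" using sm unfolding smooth_def by blast
  obtain K where K: "K > 0" "\<And>x. norm (P x) \<le> norm x * K"
    using bounded_linear.pos_bounded[OF bl] by blast
  define D' where "D' k y vs = P (D k y vs)" for k y vs
  have bm: "bounded_multilinear k (D k y)" for k y using D unfolding derivative_tower_def by blast
  have "derivative_tower (\<lambda>y. P (f y)) D'"
    unfolding derivative_tower_def
  proof (intro conjI allI)
    fix y show "D' 0 y [] = P (f y)" using D unfolding derivative_tower_def D'_def by simp
  next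
    fix k y
    show "bounded_multilinear k (D' k y)"
      unfolding bounded_multilinear_def
    proof (intro conjI allI impI)
      fix i and vs :: "'a list" assume "i < k" "length vs = k"
      then have "linear (\<lambda>v. D k y (vs[i := v]))" using bm unfolding bounded_multilinear_def by blast
      then show "linear (\<lambda>v. D' k y (vs[i := v]))"
        unfolding D'_def using linear_compose[of "\<lambda>v. D k y (vs[i := v])" P] bounded_linear.linear[OF bl]
        by (simp add: o_def)
    next
      obtain B where B: "\<forall>vs::'a list. length vs = k \<and> (\<forall>v\<in>set vs. norm v \<le> 1) \<longrightarrow> norm (D k y vs) \<le> B"
        using bm unfolding bounded_multilinear_def bdd_norm_iff by blast
      show "bdd_above {norm (D' k y vs) |vs. length vs = k \<and> (\<forall>v\<in>set vs. norm v \<le> 1)}"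
        unfolding bdd_norm_iff D'_def
      proof (rule exI[of _ "B * K"], intro allI impI)
        fix vs :: "'a list" assume "length vs = k \<and> (\<forall>v\<in>set vs. norm v \<le> 1)"
        then have "norm (D k y vs) * K \<le> B * K" using B K(1) by (simp add: mult_right_mono)
        then show "norm (P (D k y vs)) \<le> B * K" using K(2)[of "D k y vs"] by linarith
      qed
    qed
  next
    fix k y
    define E where "E h vs = D k (y + h) vs - D k y vs - D (Suc k) y (h # vs)" for h vs
    have lim: "((\<lambda>h. mnorm k (E h) / norm h) \<longlongrightarrow> 0) (at 0)"
      using D unfolding derivative_tower_def E_def by blast
    have bddE: "bdd_above {norm (E h vs) |vs. length vs = k \<and> (\<forall>v\<in>set vs. norm v \<le> 1)}" for h
    proof -
      obtain B1 where B1: "\<forall>vs::'a list. length vs = k \<and> (\<forall>v\<in>set vs. norm v \<le> 1) \<longrightarrow> norm (D k (y+h) vs) \<le> B1"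
        using bm unfolding bounded_multilinear_def bdd_norm_iff by blast
      obtain B2 where B2: "\<forall>vs::'a list. length vs = k \<and> (\<forall>v\<in>set vs. norm v \<le> 1) \<longrightarrow> norm (D k y vs) \<le> B2"
        using bm unfolding bounded_multilinear_def bdd_norm_iff by blast
      obtain B3 where B3: "\<forall>vs::'a list. length vs = k \<and> (\<forall>v\<in>set vs. norm v \<le> 1) \<longrightarrow> norm (D (Suc k) y (h # vs)) \<le> B3"
        using bdd_first_slot[OF bm] by blast
      show ?thesis unfolding bdd_norm_iff
      proof (rule exI[of _ "B1 + B2 + B3"], intro allI impI)
        fix vs :: "'a list" assume vs: "length vs = k \<and> (\<forall>v\<in>set vs. norm v \<le> 1)"
        have "norm (E h vs) \<le> norm (D k (y+h) vs) + norm (D k y vs) + norm (D (Suc k) y (h # vs))"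
        proof -
          have "norm (E h vs) \<le> norm (D k (y+h) vs - D k y vs) + norm (D (Suc k) y (h # vs))"
            unfolding E_def by (rule norm_triangle_ineq4)
          moreover have "norm (D k (y+h) vs - D k y vs) \<le> norm (D k (y+h) vs) + norm (D k y vs)"
            by (rule norm_triangle_ineq4)
          ultimately show ?thesis by linarith
        qed
        moreover have "norm (D k (y+h) vs) \<le> B1" "norm (D k y vs) \<le> B2" "norm (D (Suc k) y (h # vs)) \<le> B3"
          using B1 B2 B3 vs by blast+
        ultimately show "norm (E h vs) \<le> B1 + B2 + B3" by linarith
      qed
    qed
    have eq: "(\<lambda>vs. D' k (y + h) vs - D' k y vs - D' (Suc k) y (h # vs)) = (\<lambda>vs. P (E h vs))" for h
      unfolding D'_def E_def by (simp add: linear_diff[OF bounded_linear.linear[OF bl]])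
    show "((\<lambda>h. mnorm k (\<lambda>vs. D' k (y + h) vs - D' k y vs - D' (Suc k) y (h # vs)) / norm h) \<longlongrightarrow> 0) (at 0)"
      unfolding eq
    proof (rule tendsto_sandwich[where f = "\<lambda>_. 0" and h = "\<lambda>h. K * (mnorm k (E h) / norm h)"])
      show "\<forall>\<^sub>F h in at 0. 0 \<le> mnorm k (\<lambda>vs. P (E h vs)) / norm h"
      proof (rule always_eventually, rule allI)
        fix h
        have "bdd_above {norm (P (E h vs)) |vs. length vs = k \<and> (\<forall>v\<in>set vs. norm v \<le> 1)}"
        proof -
          obtain B where B: "\<forall>vs::'a list. length vs = k \<and> (\<forall>v\<in>set vs. norm v \<le> 1) \<longrightarrow> norm (E h vs) \<le> B"
            using bddE[of h] unfolding bdd_norm_iff by blast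
          show ?thesis unfolding bdd_norm_iff
          proof (rule exI[of _ "B * K"], intro allI impI)
            fix vs :: "'a list" assume "length vs = k \<and> (\<forall>v\<in>set vs. norm v \<le> 1)"
            then have "norm (E h vs) * K \<le> B * K" using B K(1) by (simp add: mult_right_mono)
            then show "norm (P (E h vs)) \<le> B * K" using K(2)[of "E h vs"] by linarith
          qed
        qed
        then show "0 \<le> mnorm k (\<lambda>vs. P (E h vs)) / norm h"
          by (intro divide_nonneg_nonneg mnorm_nonneg) simp_all
      qed
    next
      show "\<forall>\<^sub>F h in at 0. mnorm k (\<lambda>vs. P (E h vs)) / norm h \<le> K * (mnorm k (E h) / norm h)"
      proof (rule always_eventually, rule allI)
        fix h
        have "mnorm k (\<lambda>vs. P (E h vs)) \<le> K * mnorm k (E h)"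
          by (rule mnorm_comp_le[OF bddE K])
        then have "mnorm k (\<lambda>vs. P (E h vs)) / norm h \<le> (K * mnorm k (E h)) / norm h"
          by (simp add: divide_right_mono)
        then show "mnorm k (\<lambda>vs. P (E h vs)) / norm h \<le> K * (mnorm k (E h) / norm h)" by simp
      qed
    next
      show "((\<lambda>_. 0) \<longlongrightarrow> (0::real)) (at 0)" by simp
      show "((\<lambda>h. K * (mnorm k (E h) / norm h)) \<longlongrightarrow> 0) (at 0)"
        using tendsto_mult_right_zero[OF lim] by simp
    qed
  qed
  then show ?thesis unfolding smooth_def by blast
qed

theorem proposition4p14:
  fixes N :: nat
    and \<psi>Y :: "('y::banach \<Rightarrow> 'y) list \<Rightarrow> ('y \<Rightarrow> 'y)"
    and \<psi>U :: "('u::banach \<Rightarrow> 'u) list \<Rightarrow> ('u \<Rightarrow> 'u)"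
    and p :: "nat \<Rightarrow> 'y \<Rightarrow> 'y"
    and q :: "nat \<Rightarrow> 'u \<Rightarrow> 'u"
  assumes "maps_fields N \<psi>Y" and "maps_fields N \<psi>U"
    and "affine_equivariant_pair N \<psi>Y \<psi>Y" and "affine_equivariant_pair N \<psi>Y \<psi>U"
    and "affine_equivariant_pair N \<psi>U \<psi>Y" and "affine_equivariant_pair N \<psi>U \<psi>U"
    and "partition N p" and "partition N q"
  shows "\<forall>A f g. P_affine N p q A \<and> smooth f \<and> smooth g \<and> related A f g \<longrightarrow>
           related A (induced_partitioned N p \<psi>Y f) (induced_partitioned N q \<psi>U g)"
proof (intro allI impI, elim conjE)
  fix A :: "'y \<Rightarrow> 'u" and f g
  assume PA: "P_affine N p q A" and sf: "smooth f" and sg: "smooth g" and rel: "related A f g"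
  have pbl: "\<And>\<nu>. \<nu> < N \<Longrightarrow> bounded_linear (p \<nu>)"
    and pp: "\<And>\<nu> \<mu> y. \<nu> < N \<Longrightarrow> \<mu> < N \<Longrightarrow> p \<nu> (p \<mu> y) = (if \<nu> = \<mu> then p \<nu> y else 0)"
    using assms(7) unfolding partition_def by blast+
  have qbl: "\<And>\<nu>. \<nu> < N \<Longrightarrow> bounded_linear (q \<nu>)"
    and qq: "\<And>\<nu> \<mu> y. \<nu> < N \<Longrightarrow> \<mu> < N \<Longrightarrow> q \<nu> (q \<mu> y) = (if \<nu> = \<mu> then q \<nu> y else 0)"
    using assms(8) unfolding partition_def by blast+
  obtain Ac where Ac: "\<forall>\<nu><N. affine_map (Ac \<nu>) \<and> Ac \<nu> ` range (p \<nu>) \<subseteq> range (q \<nu>)"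
    and Aeq: "\<forall>y. A y = (\<Sum>\<nu><N. Ac \<nu> (p \<nu> y))"
    using PA unfolding P_affine_def by blast
  have ex: "\<forall>\<nu>. \<exists>Lb. \<nu> < N \<longrightarrow> bounded_linear (fst Lb) \<and> (\<forall>x. Ac \<nu> x = fst Lb x + snd Lb)"
    using Ac unfolding affine_map_def by (metis fst_conv snd_conv)
  then obtain F where F: "\<forall>\<nu>. \<nu> < N \<longrightarrow> bounded_linear (fst (F \<nu>)) \<and> (\<forall>x. Ac \<nu> x = fst (F \<nu>) x + snd (F \<nu>))"
    by (metis choice)
  define L where "L \<nu> = fst (F \<nu>)" for \<nu>
  define b where "b \<nu> = snd (F \<nu>)" for \<nu>
  have Lbl: "\<And>\<nu>. \<nu> < N \<Longrightarrow> bounded_linear (L \<nu>)" and AcL: "\<And>\<nu> x. \<nu> < N \<Longrightarrow> Ac \<nu> x = L \<nu> x + b \<nu>"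
    using F unfolding L_def b_def by blast+
  define LL where "LL v = (\<Sum>\<nu><N. L \<nu> (p \<nu> v))" for v
  define bb where "bb = (\<Sum>\<nu><N. b \<nu>)"
  have Aform: "A = (\<lambda>y. LL y + bb)"
  proof
    fix y
    have "A y = (\<Sum>\<nu><N. L \<nu> (p \<nu> y) + b \<nu>)" using Aeq AcL by simp
    then show "A y = LL y + bb" unfolding LL_def bb_def by (simp add: sum.distrib)
  qed
  have blLL: "bounded_linear LL"
    unfolding LL_def
    by (rule bounded_linear_sum) (auto intro: bounded_linear_compose[OF Lbl pbl])
  have affA: "affine_map A" unfolding affine_map_def Aform using blLL by blast
  have fd: "frechet_derivative A (at y) = LL" for y
  proof -
    have "(A has_derivative LL) (at y)" unfolding Aform
      by (rule has_derivative_add_const) (rule bounded_linear_imp_has_derivative[OF blLL])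
    then show ?thesis by (rule frechet_derivative_at[symmetric])
  qed
  have rng: "\<exists>w. L \<mu> (p \<mu> v) = q \<mu> w" if "\<mu> < N" for \<mu> v
  proof -
    have "Ac \<mu> (p \<mu> v) \<in> range (q \<mu>)" "Ac \<mu> (p \<mu> 0) \<in> range (q \<mu>)" using Ac that by blast+
    then obtain w1 w0 where w: "Ac \<mu> (p \<mu> v) = q \<mu> w1" "Ac \<mu> (p \<mu> 0) = q \<mu> w0" by blast
    have p0: "p \<mu> 0 = 0" using linear_0[OF bounded_linear.linear[OF pbl[OF that]]] .
    have L0: "L \<mu> 0 = 0" using linear_0[OF bounded_linear.linear[OF Lbl[OF that]]] .
    have "L \<mu> (p \<mu> v) = Ac \<mu> (p \<mu> v) - Ac \<mu> (p \<mu> 0)" using AcL[OF that] p0 L0 by simp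
    also have "\<dots> = q \<mu> (w1 - w0)" using w linear_diff[OF bounded_linear.linear[OF qbl[OF that]]] by simp
    finally show ?thesis by blast
  qed
  have key: "LL (p \<nu> v) = q \<nu> (LL v)" if nu: "\<nu> < N" for \<nu> v
  proof -
    have "LL (p \<nu> v) = (\<Sum>\<mu><N. if \<mu> = \<nu> then L \<nu> (p \<nu> v) else 0)"
      unfolding LL_def
    proof (rule sum.cong)
      fix \<mu> assume "\<mu> \<in> {..<N}"
      then have mu: "\<mu> < N" by simp
      show "L \<mu> (p \<mu> (p \<nu> v)) = (if \<mu> = \<nu> then L \<nu> (p \<nu> v) else 0)"
        using pp[OF mu nu] linear_0[OF bounded_linear.linear[OF Lbl[OF mu]]] by simp
    qed simp
    also have "\<dots> = L \<nu> (p \<nu> v)" using nu by simp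
    finally have e1: "LL (p \<nu> v) = L \<nu> (p \<nu> v)" .
    have "q \<nu> (LL v) = (\<Sum>\<mu><N. q \<nu> (L \<mu> (p \<mu> v)))"
      unfolding LL_def by (rule linear_sum[OF bounded_linear.linear[OF qbl[OF nu]]])
    also have "\<dots> = (\<Sum>\<mu><N. if \<mu> = \<nu> then L \<nu> (p \<nu> v) else 0)"
    proof (rule sum.cong)
      fix \<mu> assume "\<mu> \<in> {..<N}"
      then have mu: "\<mu> < N" by simp
      obtain w where w: "L \<mu> (p \<mu> v) = q \<mu> w" using rng[OF mu] by blast
      show "q \<nu> (L \<mu> (p \<mu> v)) = (if \<mu> = \<nu> then L \<nu> (p \<nu> v) else 0)"
        unfolding w using qq[OF nu mu] w by auto
    qed simp
    also have "\<dots> = L \<nu> (p \<nu> v)" using nu by simp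
    finally show ?thesis using e1 by simp
  qed
  define fs where "fs = map (\<lambda>\<nu>. component p \<nu> f) [0..<N]"
  define gs where "gs = map (\<lambda>\<nu>. component q \<nu> g) [0..<N]"
  have sfs: "\<forall>h\<in>set fs. smooth h"
    unfolding fs_def component_def using smooth_comp[OF pbl sf] by auto
  have sgs: "\<forall>h\<in>set gs. smooth h"
    unfolding gs_def component_def using smooth_comp[OF qbl sg] by auto
  have rels: "\<forall>i<N. related A (fs ! i) (gs ! i)"
  proof (intro allI impI)
    fix i assume i: "i < N"
    have "frechet_derivative A (at y) (p i (f y)) = q i (g (A y))" for y
      using rel key[OF i] unfolding related_def fd by metis
    then show "related A (fs ! i) (gs ! i)"
      unfolding fs_def gs_def related_def component_def using i by simp
  qed
  have "related A (\<psi>Y fs) (\<psi>U gs)"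
    using assms(4) affA sfs sgs rels unfolding affine_equivariant_pair_def fs_def gs_def by simp
  then show "related A (induced_partitioned N p \<psi>Y f) (induced_partitioned N q \<psi>U g)"
    unfolding induced_partitioned_def fs_def gs_def .
qed

end
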